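(* For $\alpha_1,\alpha_2\in\mathbf{C}$, the superalgebras $B_{2,\alpha_1}$ and $B_{2,\alpha_2}$ are isomorphic if and only if $\alpha_1=\alpha_2$.
   Context: Isomorphisms are even bijective linear maps preserving the product. For $\alpha\in\mathbf{C}$, put $\beta=1+\alpha$, $\gamma=1-\alpha$. $B_{2,\alpha}$ is the superalgebra on the superspace with ordered basis $(x_1,x_2,x_3,x_4,y_1,y_2,y_3,y_4)$ ($x_i$ even, $y_j$ odd) given by left multiplication matrices $L(a)$, whose $j$-th column is the coordinate vector of $a\cdot(\text{$j$-th basis vector})$. Write $L(a)=\begin{pmatrix}P&Q\\R&S\end{pmatrix}$ with $4\times4$ blocks; for $a=x_i$, $Q=R=0$; for $a=y_j$, $P=S=0$. Rows separated by semicolons: $L(x_1)$: $P=[0,0,-1,\beta;0,0,0,0;0,\beta/2,0,0;0,\tfrac12,0,0]$, $S=0$. $L(x_2)$: $P=[0,0,0,0;0,0,1,\gamma;-\gamma/2,0,0,0;\tfrac12,0,0,0]$, $S=0$. $L(x_3)$: $P=[1,0,0,0;0,-1,0,0;0,0,\alpha,\beta\gamma;0,0,1,-\alpha]$, $S=0$. $L(x_4)$: $P=[\beta,0,0,0;0,\gamma,0,0;0,0,\beta\gamma,-\alpha\beta\gamma;0,0,-\alpha,1+\alpha^2]$, $S=\mathrm{diag}(2-\alpha,2+\alpha,\alpha,-\alpha)$. $L(y_1)$: $Q=[0,0,0,0;0,0,0,\alpha\beta/4;0,0,-\alpha\gamma/4,0;0,0,\alpha/4,0]$, $R=[0,0,1,\gamma;1,0,0,0;0,0,0,0;0,0,0,0]$.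 $L(y_2)$: $Q=[0,0,-\alpha/2,0;0,0,0,0;0,0,0,-\alpha\beta/4;0,0,0,-\alpha/4]$, $R=[0,1,0,0;0,0,-1,\beta;0,0,0,0;0,0,0,0]$. $L(y_3)$: $Q=[0,1+\alpha/2,0,0;0,0,0,0;(\alpha\gamma+2)/4,0,0,0;(2-\alpha)/4,0,0,0]$, $R=[0,0,0,0;0,0,0,0;0,0,-1,\beta;0,-1,0,0]$. $L(y_4)$: $Q=[0,0,0,0;1-\alpha\beta/4,0,0,0;0,(\alpha\beta-2)/4,0,0;0,(\alpha+2)/4,0,0]$, $R=[0,0,0,0;0,0,0,0;-1,0,0,0;0,0,1,\gamma]$. *)

theory Defs
  imports Complex_Main
begin

text \<open>The superalgebra B_{2,alpha} on C^8. Basis (x1,x2,x3,x4,y1,y2,y3,y4) is indexed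
  0..7; indices 0..3 are even, 4..7 are odd. Vectors are functions nat => complex
  vanishing outside {0..<8}.  Lmat alpha a r c is the (r,c) entry of the left
  multiplication matrix L(e_a), i.e. the e_r-coordinate of e_a * e_c.\<close>

definition Z4 :: "complex list list" where
  "Z4 = replicate 4 (replicate 4 0)"

definition blocks :: "complex \<Rightarrow> nat \<Rightarrow> complex list list \<times> complex list list \<times> complex list list \<times> complex list list" where
  "blocks \<alpha> a = (let \<beta> = 1 + \<alpha>; \<gamma> = 1 - \<alpha> in
    if a = 0 then
      ([[0,0,-1,\<beta>],[0,0,0,0],[0,\<beta>/2,0,0],[0,1/2,0,0]], Z4, Z4, Z4)
    else if a = 1 then
      ([[0,0,0,0],[0,0,1,\<gamma>],[-\<gamma>/2,0,0,0],[1/2,0,0,0]], Z4, Z4, Z4)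
    else if a = 2 then
      ([[1,0,0,0],[0,-1,0,0],[0,0,\<alpha>,\<beta>*\<gamma>],[0,0,1,-\<alpha>]], Z4, Z4, Z4)
    else if a = 3 then
      ([[\<beta>,0,0,0],[0,\<gamma>,0,0],[0,0,\<beta>*\<gamma>,-\<alpha>*\<beta>*\<gamma>],[0,0,-\<alpha>,1+\<alpha>^2]], Z4, Z4,
       [[2-\<alpha>,0,0,0],[0,2+\<alpha>,0,0],[0,0,\<alpha>,0],[0,0,0,-\<alpha>]])
    else if a = 4 then
      (Z4, [[0,0,0,0],[0,0,0,\<alpha>*\<beta>/4],[0,0,-\<alpha>*\<gamma>/4,0],[0,0,\<alpha>/4,0]],
           [[0,0,1,\<gamma>],[1,0,0,0],[0,0,0,0],[0,0,0,0]], Z4)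
    else if a = 5 then
      (Z4, [[0,0,-\<alpha>/2,0],[0,0,0,0],[0,0,0,-\<alpha>*\<beta>/4],[0,0,0,-\<alpha>/4]],
           [[0,1,0,0],[0,0,-1,\<beta>],[0,0,0,0],[0,0,0,0]], Z4)
    else if a = 6 then
      (Z4, [[0,1+\<alpha>/2,0,0],[0,0,0,0],[(\<alpha>*\<gamma>+2)/4,0,0,0],[(2-\<alpha>)/4,0,0,0]],
           [[0,0,0,0],[0,0,0,0],[0,0,-1,\<beta>],[0,-1,0,0]], Z4)
    else if a = 7 then
      (Z4, [[0,0,0,0],[1-\<alpha>*\<beta>/4,0,0,0],[0,(\<alpha>*\<beta>-2)/4,0,0],[0,(\<alpha>+2)/4,0,0]],
           [[0,0,0,0],[0,0,0,0],[-1,0,0,0],[0,0,1,\<gamma>]], Z4)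
    else (Z4, Z4, Z4, Z4))"

definition Lmat :: "complex \<Rightarrow> nat \<Rightarrow> nat \<Rightarrow> nat \<Rightarrow> complex" where
  "Lmat \<alpha> a r c = (case blocks \<alpha> a of (P, Q, R, S) \<Rightarrow>
     if r < 4 \<and> c < 4 then P ! r ! c
     else if r < 4 \<and> 4 \<le> c \<and> c < 8 then Q ! r ! (c - 4)
     else if 4 \<le> r \<and> r < 8 \<and> c < 4 then R ! (r - 4) ! c
     else if 4 \<le> r \<and> r < 8 \<and> 4 \<le> c \<and> c < 8 then S ! (r - 4) ! (c - 4)
     else 0)"

definition V8 :: "(nat \<Rightarrow> complex) set" where
  "V8 = {v. \<forall>k\<ge>8. v k = 0}"

definition V8_even :: "(nat \<Rightarrow> complex) set" where
  "V8_even = {v. \<forall>k\<ge>4. v k = 0}"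

definition V8_odd :: "(nat \<Rightarrow> complex) set" where
  "V8_odd = {v. \<forall>k. (k < 4 \<or> 8 \<le> k) \<longrightarrow> v k = 0}"

definition Bmult :: "complex \<Rightarrow> (nat \<Rightarrow> complex) \<Rightarrow> (nat \<Rightarrow> complex) \<Rightarrow> (nat \<Rightarrow> complex)" where
  "Bmult \<alpha> u v = (\<lambda>r. if r < 8 then (\<Sum>a<8. \<Sum>c<8. u a * v c * Lmat \<alpha> a r c) else 0)"

definition B2_isomorphic :: "complex \<Rightarrow> complex \<Rightarrow> bool" where
  "B2_isomorphic \<alpha>1 \<alpha>2 = (\<exists>f.
      bij_betw f V8 V8 \<and>
      (\<forall>u\<in>V8. \<forall>v\<in>V8. f (\<lambda>k. u k + v k) = (\<lambda>k. f u k + f v k)) \<and>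
      (\<forall>c. \<forall>u\<in>V8. f (\<lambda>k. c * u k) = (\<lambda>k. c * f u k)) \<and>
      f ` V8_even \<subseteq> V8_even \<and> f ` V8_odd \<subseteq> V8_odd \<and>
      (\<forall>u\<in>V8. \<forall>v\<in>V8. f (Bmult \<alpha>1 u v) = Bmult \<alpha>2 (f u) (f v)))"

end

theory Submission imports Defs begin
lemma sum8: "(\<Sum>a<(8::nat). g a) = g 0 + g 1 + g 2 + g 3 + g 4 + g 5 + g 6 + g 7"
  by (simp add: eval_nat_numeral add.assoc)
lemma Bm0: "Bmult al u v 0 = u 0 * v 2 * (-1) + u 0 * v 3 * ((1+al)) + u 2 * v 0 * (1) + u 3 * v 0 * ((1+al)) + u 5 * v 6 * (-al/2) + u 6 * v 5 * (1+al/2)"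
  by (simp add: Bmult_def sum8 Lmat_def blocks_def Z4_def Let_def)

lemma Bm1: "Bmult al u v 1 = u 1 * v 2 * (1) + u 1 * v 3 * ((1-al)) + u 2 * v 1 * (-1) + u 3 * v 1 * ((1-al)) + u 4 * v 7 * (al*(1+al)/4) + u 7 * v 4 * (1-al*(1+al)/4)"
  by (simp add: Bmult_def sum8 Lmat_def blocks_def Z4_def Let_def)

lemma Bm2: "Bmult al u v 2 = u 0 * v 1 * ((1+al)/2) + u 1 * v 0 * (-(1-al)/2) + u 2 * v 2 * (al) + u 2 * v 3 * ((1+al)*(1-al)) + u 3 * v 2 * ((1+al)*(1-al)) + u 3 * v 3 * (-al*(1+al)*(1-al)) + u 4 * v 6 * (-al*(1-al)/4) + u 5 * v 7 * (-al*(1+al)/4) + u 6 * v 4 * ((al*(1-al)+2)/4) + u 7 * v 5 * ((al*(1+al)-2)/4)"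
  by (simp add: Bmult_def sum8 Lmat_def blocks_def Z4_def Let_def)

lemma Bm3: "Bmult al u v 3 = u 0 * v 1 * (1/2) + u 1 * v 0 * (1/2) + u 2 * v 2 * (1) + u 2 * v 3 * (-al) + u 3 * v 2 * (-al) + u 3 * v 3 * (1+al^2) + u 4 * v 6 * (al/4) + u 5 * v 7 * (-al/4) + u 6 * v 4 * ((2-al)/4) + u 7 * v 5 * ((al+2)/4)"
  by (simp add: Bmult_def sum8 Lmat_def blocks_def Z4_def Let_def)

lemma Bm4: "Bmult al u v 4 = u 3 * v 4 * (2-al) + u 4 * v 2 * (1) + u 4 * v 3 * ((1-al)) + u 5 * v 1 * (1)"
  by (simp add: Bmult_def sum8 Lmat_def blocks_def Z4_def Let_def)

lemma Bm5: "Bmult al u v 5 = u 3 * v 5 * (2+al) + u 4 * v 0 * (1) + u 5 * v 2 * (-1) + u 5 * v 3 * ((1+al))"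
  by (simp add: Bmult_def sum8 Lmat_def blocks_def Z4_def Let_def)

lemma Bm6: "Bmult al u v 6 = u 3 * v 6 * (al) + u 6 * v 2 * (-1) + u 6 * v 3 * ((1+al)) + u 7 * v 0 * (-1)"
  by (simp add: Bmult_def sum8 Lmat_def blocks_def Z4_def Let_def)

lemma Bm7: "Bmult al u v 7 = u 3 * v 7 * (-al) + u 6 * v 1 * (-1) + u 7 * v 2 * (1) + u 7 * v 3 * ((1-al))"
  by (simp add: Bmult_def sum8 Lmat_def blocks_def Z4_def Let_def)
lemma Bmult_ge8: "8 \<le> r \<Longrightarrow> Bmult al u v r = 0" by (simp add: Bmult_def)
lemma Bmult_V8: "Bmult al u v \<in> V8" by (simp add: V8_def Bmult_def)

definition ev :: "nat \<Rightarrow> nat \<Rightarrow> complex" where "ev j = (\<lambda>i. if i = j then 1 else 0)"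

lemma ev_V8: "j < 8 \<Longrightarrow> ev j \<in> V8" by (simp add: V8_def ev_def)
lemma ev_even: "j < 4 \<Longrightarrow> ev j \<in> V8_even" by (simp add: V8_even_def ev_def)
lemma ev_odd: "4 \<le> j \<Longrightarrow> j < 8 \<Longrightarrow> ev j \<in> V8_odd" by (auto simp: V8_odd_def ev_def)

lemma vec_eq8: "((F::nat\<Rightarrow>complex) = G) \<longleftrightarrow> (F 0 = G 0 \<and> F 1 = G 1 \<and> F 2 = G 2 \<and> F 3 = G 3 \<and> F 4 = G 4 \<and> F 5 = G 5 \<and> F 6 = G 6 \<and> F 7 = G 7 \<and> (\<forall>k\<ge>8. F k = G k))"
proof
  assume h: "F 0 = G 0 \<and> F 1 = G 1 \<and> F 2 = G 2 \<and> F 3 = G 3 \<and> F 4 = G 4 \<and> F 5 = G 5 \<and> F 6 = G 6 \<and> F 7 = G 7 \<and> (\<forall>k\<ge>8. F k = G k)"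
  show "F = G"
  proof
    fix k show "F k = G k"
    proof (cases "k < 8")
      case True then have "k = 0 \<or> k = 1 \<or> k = 2 \<or> k = 3 \<or> k = 4 \<or> k = 5 \<or> k = 6 \<or> k = 7" by auto
      then show ?thesis using h by auto
    next
      case False then show ?thesis using h by auto
    qed
  qed
qed auto

lemma oddD: "y \<in> V8_odd \<Longrightarrow> y 0 = 0 \<and> y 1 = 0 \<and> y 2 = 0 \<and> y 3 = 0 \<and> (\<forall>k\<ge>8. y k = 0)"
  by (auto simp: V8_odd_def)

lemmas Bm = Bm0 Bm1 Bm1[unfolded One_nat_def] Bm2 Bm3 Bm4 Bm5 Bm6 Bm7

lemma V1: "y \<in> V8_odd \<Longrightarrow> a < 3 \<Longrightarrow> Bmult al (ev a) y = (\<lambda>k. 0)"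
  apply (drule oddD)
  apply (subgoal_tac "a = 0 \<or> a = 1 \<or> a = 2")
  apply (auto simp: vec_eq8 Bm ev_def Bmult_ge8)
  done

lemma V2: "Bmult al (ev 2) (ev 2) = (\<lambda>k. al * ev 2 k + 1 * ev 3 k)"
  by (auto simp: vec_eq8 Bm ev_def Bmult_ge8)

lemma V3: "y \<in> V8_odd \<Longrightarrow> Bmult al y (ev 3) = (\<lambda>k. 1 * y k + (-al) * Bmult al y (ev 2) k)"
  by (drule oddD) (auto simp: vec_eq8 Bm ev_def Bmult_ge8 algebra_simps)

definition Pr :: "(nat \<Rightarrow> complex) \<Rightarrow> nat \<Rightarrow> complex" where
  "Pr y = (\<lambda>k. if k = 4 \<or> k = 5 then y k else 0)"

lemma V4: "y \<in> V8_odd \<Longrightarrow> (\<lambda>k. 1 * Bmult al (ev 3) y k + al * Bmult al y (ev 2) k) = (\<lambda>k. 2 * Pr y k)"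
  by (drule oddD) (auto simp: vec_eq8 Bm ev_def Bmult_ge8 algebra_simps Pr_def)

lemma Pr_odd: "y \<in> V8_odd \<Longrightarrow> Pr y \<in> V8_odd" by (auto simp: V8_odd_def Pr_def)
lemma Pr_Pr: "Pr (Pr y) = Pr y" by (auto simp: Pr_def)

lemma V5:
  "Bmult al (ev 3) (ev 4) = (\<lambda>k. (2-al) * ev 4 k)"
  "Bmult al (ev 3) (ev 5) = (\<lambda>k. (2+al) * ev 5 k)"
  "Bmult al (ev 3) (ev 6) = (\<lambda>k. al * ev 6 k)"
  "Bmult al (ev 3) (ev 7) = (\<lambda>k. (-al) * ev 7 k)"
  "Bmult al (ev 4) (ev 2) = (\<lambda>k. 1 * ev 4 k)"
  "Bmult al (ev 5) (ev 2) = (\<lambda>k. (-1) * ev 5 k)"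
  "Bmult al (ev 6) (ev 2) = (\<lambda>k. (-1) * ev 6 k)"
  "Bmult al (ev 7) (ev 2) = (\<lambda>k. 1 * ev 7 k)"
  "Bmult al (ev 2) (ev 0) = (\<lambda>k. 1 * ev 0 k)"
  "Bmult al (ev 2) (ev 1) = (\<lambda>k. (-1) * ev 1 k)"
  "Bmult al (ev 5) (ev 6) = (\<lambda>k. (-al/2) * ev 0 k)"
  "Bmult al (ev 6) (ev 5) = (\<lambda>k. (1+al/2) * ev 0 k)"
  "Bmult al (ev 4) (ev 7) = (\<lambda>k. (al*(1+al)/4) * ev 1 k)"
  "Bmult al (ev 7) (ev 4) = (\<lambda>k. (1-al*(1+al)/4) * ev 1 k)"
  by (auto simp: vec_eq8 Bm ev_def Bmult_ge8)

lemma fin1: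
  fixes a1 a2 X S :: complex
  assumes Q1: "(-a1/2) * X = S * (a2*(1+a2)/4)" and Q2: "(1+a1/2) * X = S * (1 - a2*(1+a2)/4)"
   and a2: "a2 = - a1" and a10: "a1 \<noteq> 0"
  shows "S * (1 + a1) = 0"
proof -
  have q1: "- (2 * a1 * X) = S * (a2*(1+a2))" using Q1 by (simp add: field_simps)
  have q2: "(2+a1) * X * 4 = S * (8 - 2*(a2*(1+a2)))" using Q2 by (simp add: field_simps)
  have "a1 * (S * (1 + a1)) = 0" using q1 q2 a2 by algebra
  then show ?thesis using a10 by simp
qed

lemma fin2:
  fixes a1 a2 Y R :: complex
  assumes Q3: "(a1*(1+a1)/4) * Y = R * (-a2/2)" and a2: "a2 = - a1" and a1: "a1 = -1"
  shows "R = 0"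
  using Q3 a2 a1 by simp

locale isoB =
  fixes f :: "(nat \<Rightarrow> complex) \<Rightarrow> nat \<Rightarrow> complex" and a1 a2 :: complex
  assumes bij: "bij_betw f V8 V8"
  and add: "\<forall>u\<in>V8. \<forall>v\<in>V8. f (\<lambda>k. u k + v k) = (\<lambda>k. f u k + f v k)"
  and scl: "\<forall>c. \<forall>u\<in>V8. f (\<lambda>k. c * u k) = (\<lambda>k. c * f u k)"
  and evp: "f ` V8_even \<subseteq> V8_even" and odp: "f ` V8_odd \<subseteq> V8_odd"
  and mul: "\<forall>u\<in>V8. \<forall>v\<in>V8. f (Bmult a1 u v) = Bmult a2 (f u) (f v)"
begin

lemma fV: "u \<in> V8 \<Longrightarrow> f u \<in> V8" using bij by (auto simp: bij_betw_def)

lemma odd_V8: "u \<in> V8_odd \<Longrightarrow> u \<in> V8" by (auto simp: V8_odd_def V8_def)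
lemma even_V8: "u \<in> V8_even \<Longrightarrow> u \<in> V8" by (auto simp: V8_even_def V8_def)

lemma comb: "u \<in> V8 \<Longrightarrow> v \<in> V8 \<Longrightarrow> f (\<lambda>k. a * u k + b * v k) = (\<lambda>k. a * f u k + b * f v k)"
proof -
  assume u: "u \<in> V8" and v: "v \<in> V8"
  have "(\<lambda>k. a * u k) \<in> V8" "(\<lambda>k. b * v k) \<in> V8" using u v by (auto simp: V8_def)
  then have "f (\<lambda>k. a * u k + b * v k) = (\<lambda>k. f (\<lambda>k. a * u k) k + f (\<lambda>k. b * v k) k)"
    using add by auto
  also have "\<dots> = (\<lambda>k. a * f u k + b * f v k)" using scl u v by auto
  finally show ?thesis .
qed

lemma f0: "f (\<lambda>k. 0) = (\<lambda>k. 0)"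
proof -
  have z: "(\<lambda>k. 0::complex) \<in> V8" by (simp add: V8_def)
  have "f (\<lambda>k. 0 * (\<lambda>k. 0::complex) k) = (\<lambda>k. 0 * f (\<lambda>k. 0) k)" using scl z by (rule_tac bspec[OF spec[OF scl]]) (rule z)
  then show ?thesis by simp
qed

lemma inj0: "u \<in> V8 \<Longrightarrow> f u = (\<lambda>k. 0) \<Longrightarrow> u = (\<lambda>k. 0)"
proof -
  assume u: "u \<in> V8" and h: "f u = (\<lambda>k. 0)"
  have z: "(\<lambda>k. 0::complex) \<in> V8" by (simp add: V8_def)
  have "inj_on f V8" using bij by (simp add: bij_betw_def)
  then show ?thesis using u z h f0 by (metis inj_onD)
qed

lemma fodd: "u \<in> V8_odd \<Longrightarrow> f u \<in> V8_odd" using odp by auto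
lemma feven: "u \<in> V8_even \<Longrightarrow> f u \<in> V8_even" using evp by auto

lemma pre_odd:
  assumes w: "w \<in> V8_odd" shows "\<exists>y\<in>V8_odd. f y = w"
proof -
  have "w \<in> V8" using w by (rule odd_V8)
  then obtain y0 where y0: "y0 \<in> V8" "f y0 = w" using bij by (metis bij_betw_def imageE)
  define ye where "ye = (\<lambda>k. if k < 4 then y0 k else 0)"
  define yo where "yo = (\<lambda>k. if k < 4 then 0 else y0 k)"
  have yee: "ye \<in> V8_even" by (simp add: ye_def V8_even_def)
  have yoo: "yo \<in> V8_odd" using y0(1) by (auto simp: yo_def V8_odd_def V8_def)
  have sum: "y0 = (\<lambda>k. 1 * ye k + 1 * yo k)" by (auto simp: ye_def yo_def)
  have "f y0 = (\<lambda>k. 1 * f ye k + 1 * f yo k)"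
    using sum comb[OF even_V8[OF yee] odd_V8[OF yoo], of 1 1] by simp
  then have fy: "w = (\<lambda>k. f ye k + f yo k)" using y0 by simp
  have "f ye = (\<lambda>k. 0)"
  proof
    fix k show "f ye k = 0"
    proof (cases "k < 4")
      case True
      have "w k = 0" using w True by (simp add: V8_odd_def)
      moreover have "f yo k = 0" using fodd[OF yoo] True by (simp add: V8_odd_def)
      ultimately show ?thesis using fy by (metis add_cancel_left_right)
    next
      case False then show ?thesis using feven[OF yee] by (simp add: V8_even_def)
    qed
  qed
  then have "ye = (\<lambda>k. 0)" using inj0 even_V8[OF yee] by blast
  then have "y0 = yo" using sum by simp
  then show ?thesis using yoo y0 by blast
qed

abbreviation m :: "nat \<Rightarrow> nat \<Rightarrow> complex" where "m j \<equiv> f (ev j)"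

lemma m_even: "j < 4 \<Longrightarrow> 4 \<le> k \<Longrightarrow> m j k = 0"
  using feven[OF ev_even, of j] by (simp add: V8_even_def)
lemma m_odd: "4 \<le> j \<Longrightarrow> j < 8 \<Longrightarrow> (k < 4 \<or> 8 \<le> k) \<Longrightarrow> m j k = 0"
  using fodd[OF ev_odd, of j] by (auto simp: V8_odd_def)

lemma mulE: "u \<in> V8 \<Longrightarrow> v \<in> V8 \<Longrightarrow> f (Bmult a1 u v) = Bmult a2 (f u) (f v)"
  using mul by blast

lemma sclE: "u \<in> V8 \<Longrightarrow> f (\<lambda>k. c * u k) = (\<lambda>k. c * f u k)" using scl by blast

lemma fz_odd: "u \<in> V8_odd \<Longrightarrow> f u 0 = 0 \<and> f u 1 = 0 \<and> f u 2 = 0 \<and> f u 3 = 0"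
  using fodd[of u] by (simp add: V8_odd_def)

lemma step1: assumes "a < 3" shows "m a 3 = 0"
proof -
  obtain y4 where y4: "y4 \<in> V8_odd" "f y4 = ev 4" using pre_odd[OF ev_odd[of 4]] by auto
  obtain y5 where y5: "y5 \<in> V8_odd" "f y5 = ev 5" using pre_odd[OF ev_odd[of 5]] by auto
  have aV: "ev a \<in> V8" using assms by (simp add: ev_V8)
  have z: "m a 4 = 0" "m a 5 = 0" using m_even assms by auto
  have "Bmult a2 (m a) (ev 4) = (\<lambda>k. 0)"
    using mulE[OF aV odd_V8[OF y4(1)]] V1[OF y4(1) assms] f0 y4(2) by simp
  then have "Bmult a2 (m a) (ev 4) 4 = 0" by simp
  then have e1: "m a 3 * (2 - a2) = 0" using z by (simp add: Bm4 ev_def)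
  have "Bmult a2 (m a) (ev 5) = (\<lambda>k. 0)"
    using mulE[OF aV odd_V8[OF y5(1)]] V1[OF y5(1) assms] f0 y5(2) by simp
  then have "Bmult a2 (m a) (ev 5) 5 = 0" by simp
  then have e2: "m a 3 * (2 + a2) = 0" using z by (simp add: Bm5 ev_def)
  have "m a 3 * 4 = m a 3 * (2 - a2) + m a 3 * (2 + a2)" by (simp add: algebra_simps)
  then show ?thesis using e1 e2 by simp
qed

definition kk where "kk = m 2 0 * m 2 1 + (m 2 2)^2"

lemma mz: "m 0 4 = 0" "m 0 5 = 0" "m 0 6 = 0" "m 0 7 = 0"
  "m 1 4 = 0" "m 1 5 = 0" "m 1 6 = 0" "m 1 7 = 0"
  "m 2 4 = 0" "m 2 5 = 0" "m 2 6 = 0" "m 2 7 = 0"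
  "m 3 4 = 0" "m 3 5 = 0" "m 3 6 = 0" "m 3 7 = 0"
  by (auto intro: m_even)

lemma step2: "m 3 0 = - a1 * m 2 0" "m 3 1 = - a1 * m 2 1"
  "m 3 2 = a2 * kk - a1 * m 2 2" "m 3 3 = kk"
proof -
  have V2': "ev 2 \<in> V8" "ev 3 \<in> V8" by (auto simp: ev_V8)
  have "f (Bmult a1 (ev 2) (ev 2)) = Bmult a2 (m 2) (m 2)" using mulE V2' by blast
  then have E: "(\<lambda>k. a1 * m 2 k + 1 * m 3 k) = Bmult a2 (m 2) (m 2)"
    using V2 comb[OF V2'] by metis
  have m23: "m 2 3 = 0" using step1 by simp
  have e0: "a1 * m 2 0 + 1 * m 3 0 = Bmult a2 (m 2) (m 2) 0" using E by metis
  have e1: "a1 * m 2 1 + 1 * m 3 1 = Bmult a2 (m 2) (m 2) 1" using E by metis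
  have e2: "a1 * m 2 2 + 1 * m 3 2 = Bmult a2 (m 2) (m 2) 2" using E by metis
  have e3: "a1 * m 2 3 + 1 * m 3 3 = Bmult a2 (m 2) (m 2) 3" using E by metis
  from e0 have "m 3 0 + a1 * m 2 0 = 0" using mz m23 by (simp add: Bm0 algebra_simps)
  then show "m 3 0 = - a1 * m 2 0" by (simp add: eq_neg_iff_add_eq_0)
  from e1 have "m 3 1 + a1 * m 2 1 = 0" using mz m23 by (simp add: Bm algebra_simps)
  then show "m 3 1 = - a1 * m 2 1" by (simp add: eq_neg_iff_add_eq_0)
  from e2 show "m 3 2 = a2 * kk - a1 * m 2 2" using mz m23 by (simp add: Bm kk_def power2_eq_square field_simps)
  from e3 show "m 3 3 = kk" using mz m23 by (simp add: Bm kk_def power2_eq_square field_simps)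
qed

lemma step3: "kk = 1"
proof -
  obtain y4 where y4: "y4 \<in> V8_odd" "f y4 = ev 4" using pre_odd[OF ev_odd[of 4]] by auto
  have V: "ev 2 \<in> V8" "ev 3 \<in> V8" "y4 \<in> V8" "Bmult a1 y4 (ev 2) \<in> V8" using y4 by (auto simp: ev_V8 odd_V8 Bmult_V8)
  have "f (Bmult a1 y4 (ev 3)) = Bmult a2 (ev 4) (m 3)" using mulE V y4 by metis
  moreover have "f (Bmult a1 y4 (ev 3)) = (\<lambda>k. 1 * ev 4 k + (-a1) * Bmult a2 (ev 4) (m 2) k)"
    using V3[OF y4(1)] comb[OF V(3,4)] mulE[OF V(3,1)] y4(2) by metis
  ultimately have "Bmult a2 (ev 4) (m 3) 4 = 1 * ev 4 4 + (-a1) * Bmult a2 (ev 4) (m 2) 4" by metis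
  then have "m 3 2 + m 3 3 * (1 - a2) = 1 - a1 * (m 2 2 + m 2 3 * (1 - a2))"
    by (simp add: Bm4 ev_def)
  then show ?thesis using step2 step1[of 2] by (simp add: algebra_simps)
qed

definition TT :: "(nat \<Rightarrow> complex) \<Rightarrow> nat \<Rightarrow> complex" where
  "TT w = (\<lambda>k. (Bmult a2 (m 3) w k + a1 * Bmult a2 w (m 2) k) / 2)"

lemma fPr: assumes y: "y \<in> V8_odd" shows "f (Pr y) = TT (f y)"
proof -
  have V: "ev 2 \<in> V8" "ev 3 \<in> V8" "y \<in> V8" "Pr y \<in> V8"
    using y Pr_odd[OF y] by (auto simp: ev_V8 odd_V8)
  have "f (\<lambda>k. 2 * Pr y k) = (\<lambda>k. 2 * f (Pr y) k)" using sclE[OF V(4)] .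
  moreover have "f (\<lambda>k. 2 * Pr y k) = (\<lambda>k. 1 * Bmult a2 (m 3) (f y) k + a1 * Bmult a2 (f y) (m 2) k)"
    using V4[OF y, of a1, symmetric] comb[OF Bmult_V8 Bmult_V8] mulE[OF V(2,3)] mulE[OF V(3,1)] by metis
  ultimately show ?thesis unfolding TT_def by (auto simp: fun_eq_iff field_simps)
qed

lemma step4: "a1 * m 2 0 = 0" "a1 * m 2 1 = 0" "a1 * m 2 2 = a2"
proof -
  obtain y4 where y4: "y4 \<in> V8_odd" "f y4 = ev 4" using pre_odd[OF ev_odd[of 4]] by auto
  obtain y5 where y5: "y5 \<in> V8_odd" "f y5 = ev 5" using pre_odd[OF ev_odd[of 5]] by auto
  have k: "m 3 3 = 1" using step2 step3 by simp
  have m23: "m 2 3 = 0" using step1 by simp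
  define z where "z = Pr y4"
  have zo: "z \<in> V8_odd" using Pr_odd y4 z_def by simp
  have fz: "f z = TT (ev 4)" using fPr[OF y4(1)] y4(2) z_def by simp
  have fz2: "f z = TT (f z)" using fPr[OF zo] Pr_Pr z_def by simp
  have zc: "f z 3 = 0" "f z 2 = 0" "f z 1 = 0" "f z 0 = 0" using fz_odd[OF zo] by auto
  have A1: "f z 4 = ((2 - a2) + a1 * m 2 2) / 2" using fz k m23 mz by (simp add: TT_def Bm ev_def)
  have A2: "f z 5 = a1 * m 2 0 / 2" using fz k m23 mz by (simp add: TT_def Bm ev_def)
  have A3: "f z 4 = ((2 - a2) * f z 4 + a1 * (m 2 2 * f z 4 + m 2 1 * f z 5)) / 2"
    using fun_cong[OF fz2, of 4] k m23 mz zc by (simp add: TT_def Bm algebra_simps)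
  have A4: "f z 5 = ((2 + a2) * f z 5 + a1 * (m 2 0 * f z 4 - m 2 2 * f z 5)) / 2"
    using fun_cong[OF fz2, of 5] k m23 mz zc by (simp add: TT_def Bm algebra_simps)
  define z' where "z' = Pr y5"
  have zo': "z' \<in> V8_odd" using Pr_odd y5 z'_def by simp
  have fz': "f z' = TT (ev 5)" using fPr[OF y5(1)] y5(2) z'_def by simp
  have fz2': "f z' = TT (f z')" using fPr[OF zo'] Pr_Pr z'_def by simp
  have zc': "f z' 3 = 0" "f z' 2 = 0" "f z' 1 = 0" "f z' 0 = 0" using fz_odd[OF zo'] by auto
  have B1: "f z' 4 = a1 * m 2 1 / 2" using fz' k m23 mz by (simp add: TT_def Bm ev_def)
  have B2: "f z' 5 = ((2 + a2) - a1 * m 2 2) / 2" using fz' k m23 mz by (simp add: TT_def Bm ev_def)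
  have B3: "f z' 4 = ((2 - a2) * f z' 4 + a1 * (m 2 2 * f z' 4 + m 2 1 * f z' 5)) / 2"
    using fun_cong[OF fz2', of 4] k m23 mz zc' by (simp add: TT_def Bm algebra_simps)
  have B4: "f z' 5 = ((2 + a2) * f z' 5 + a1 * (m 2 0 * f z' 4 - m 2 2 * f z' 5)) / 2"
    using fun_cong[OF fz2', of 5] k m23 mz zc' by (simp add: TT_def Bm algebra_simps)
  show C1: "a1 * m 2 0 = 0" using A1 A2 A4 by algebra
  show C2: "a1 * m 2 1 = 0" using B1 B2 B3 by algebra
  show "a1 * m 2 2 = a2" using A1 A2 A3 B1 B2 B4 C1 C2 by algebra
qed

lemma mo: "m 4 0 = 0" "m 4 1 = 0" "m 4 2 = 0" "m 4 3 = 0"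
  "m 5 0 = 0" "m 5 1 = 0" "m 5 2 = 0" "m 5 3 = 0"
  "m 6 0 = 0" "m 6 1 = 0" "m 6 2 = 0" "m 6 3 = 0"
  "m 7 0 = 0" "m 7 1 = 0" "m 7 2 = 0" "m 7 3 = 0"
  by (auto intro: m_odd)

lemma mulS: assumes "a < 8" "b < 8" "c < 8" "Bmult a1 (ev a) (ev b) = (\<lambda>k. s * ev c k)"
  shows "(\<lambda>k. s * m c k) = Bmult a2 (m a) (m b)"
  using mulE[of "ev a" "ev b"] sclE[of "ev c" s] assms by (simp add: ev_V8)

lemma nzl: assumes "4 \<le> c" "c < 8" "\<forall>k. k \<noteq> i \<longrightarrow> m c k = 0" shows "m c i \<noteq> 0"
proof
  assume "m c i = 0"
  then have "m c = (\<lambda>k. 0)" using assms(3) by (auto simp: fun_eq_iff)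
  then have "ev c = (\<lambda>k. 0)" using inj0 ev_V8 assms by simp
  then show False by (metis ev_def zero_neq_one)
qed

lemma main: "a1 = a2"
proof (rule ccontr)
  assume ne: "a1 \<noteq> a2"
  have a10: "a1 \<noteq> 0" using step4(3) ne by auto
  have p1: "m 2 0 = 0" and p2: "m 2 1 = 0" using step4 a10 by auto
  have "(m 2 2)^2 = 1" using step3 p1 p2 by (simp add: kk_def)
  then have "m 2 2 = 1 \<or> m 2 2 = -1" by (simp add: power2_eq_1_iff)
  then have p3: "m 2 2 = -1" using step4(3) ne by auto
  have a2: "a2 = - a1" using step4(3) p3 by simp
  have m23: "m 2 3 = 0" using step1 by simp
  have q: "m 3 0 = 0" "m 3 1 = 0" "m 3 2 = 0" "m 3 3 = 1"
    using step2 step3 p1 p2 p3 a2 by auto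
  note Z = q p1 p2 p3 m23 mz mo a2
  have D4: "(\<lambda>k. (2-a1) * m 4 k) = Bmult a2 (m 3) (m 4)" by (rule mulS) (auto simp: V5)
  have D5: "(\<lambda>k. (2+a1) * m 5 k) = Bmult a2 (m 3) (m 5)" by (rule mulS) (auto simp: V5)
  have D6: "(\<lambda>k. a1 * m 6 k) = Bmult a2 (m 3) (m 6)" by (rule mulS) (auto simp: V5)
  have D7: "(\<lambda>k. (-a1) * m 7 k) = Bmult a2 (m 3) (m 7)" by (rule mulS) (auto simp: V5)
  have E4: "(\<lambda>k. 1 * m 4 k) = Bmult a2 (m 4) (m 2)" by (rule mulS) (auto simp: V5)
  have E5: "(\<lambda>k. (-1) * m 5 k) = Bmult a2 (m 5) (m 2)" by (rule mulS) (auto simp: V5)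
  have E6: "(\<lambda>k. (-1) * m 6 k) = Bmult a2 (m 6) (m 2)" by (rule mulS) (auto simp: V5)
  have E7: "(\<lambda>k. 1 * m 7 k) = Bmult a2 (m 7) (m 2)" by (rule mulS) (auto simp: V5)
  have z4: "m 4 4 = 0" "m 4 6 = 0" "m 4 7 = 0"
    using fun_cong[OF E4, of 4] fun_cong[OF D4, of 6] fun_cong[OF E4, of 7] Z by (simp_all add: Bm algebra_simps)
  have z5: "m 5 5 = 0" "m 5 6 = 0" "m 5 7 = 0"
    using fun_cong[OF E5, of 5] fun_cong[OF E5, of 6] fun_cong[OF D5, of 7] Z by (simp_all add: Bm algebra_simps)
  have z6: "m 6 4 = 0" "m 6 5 = 0" "m 6 6 = 0"
    using fun_cong[OF D6, of 4] fun_cong[OF E6, of 5] fun_cong[OF E6, of 6] Z by (simp_all add: Bm algebra_simps)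
  have z7: "m 7 4 = 0" "m 7 5 = 0" "m 7 7 = 0"
    using fun_cong[OF E7, of 4] fun_cong[OF D7, of 5] fun_cong[OF E7, of 7] Z by (simp_all add: Bm algebra_simps)
  have "\<forall>k. k \<noteq> 4 \<longrightarrow> m 5 k = 0"
  proof (intro allI impI)
    fix k :: nat assume "k \<noteq> 4"
    then consider "k < 4 \<or> 8 \<le> k" | "k = 5" | "k = 6" | "k = 7" by linarith
    then show "m 5 k = 0" using z5 m_odd by cases auto
  qed
  then have n54: "m 5 4 \<noteq> 0" by (intro nzl) auto
  have "\<forall>k. k \<noteq> 7 \<longrightarrow> m 6 k = 0"
  proof (intro allI impI)
    fix k :: nat assume "k \<noteq> 7"
    then consider "k < 4 \<or> 8 \<le> k" | "k = 5" | "k = 6" | "k = 4" by linarith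
    then show "m 6 k = 0" using z6 m_odd by cases auto
  qed
  then have n67: "m 6 7 \<noteq> 0" by (intro nzl) auto
  have "\<forall>k. k \<noteq> 5 \<longrightarrow> m 4 k = 0"
  proof (intro allI impI)
    fix k :: nat assume "k \<noteq> 5"
    then consider "k < 4 \<or> 8 \<le> k" | "k = 4" | "k = 6" | "k = 7" by linarith
    then show "m 4 k = 0" using z4 m_odd by cases auto
  qed
  then have n45: "m 4 5 \<noteq> 0" by (intro nzl) auto
  have "\<forall>k. k \<noteq> 6 \<longrightarrow> m 7 k = 0"
  proof (intro allI impI)
    fix k :: nat assume "k \<noteq> 6"
    then consider "k < 4 \<or> 8 \<le> k" | "k = 4" | "k = 5" | "k = 7" by linarith
    then show "m 7 k = 0" using z7 m_odd by cases auto
  qed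
  then have n76: "m 7 6 \<noteq> 0" by (intro nzl) auto
  have P1: "(\<lambda>k. (-a1/2) * m 0 k) = Bmult a2 (m 5) (m 6)" by (rule mulS) (auto simp: V5)
  have P2: "(\<lambda>k. (1+a1/2) * m 0 k) = Bmult a2 (m 6) (m 5)" by (rule mulS) (auto simp: V5)
  have P3: "(\<lambda>k. (a1*(1+a1)/4) * m 1 k) = Bmult a2 (m 4) (m 7)" by (rule mulS) (auto simp: V5)
  have P4: "(\<lambda>k. (1-a1*(1+a1)/4) * m 1 k) = Bmult a2 (m 7) (m 4)" by (rule mulS) (auto simp: V5)
  have Q1: "(-a1/2) * m 0 1 = m 5 4 * m 6 7 * (a2*(1+a2)/4)"
    using fun_cong[OF P1, of 1] Z z4 z5 z6 z7 by (simp add: Bm)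
  have Q2: "(1+a1/2) * m 0 1 = m 6 7 * m 5 4 * (1 - a2*(1+a2)/4)"
    using fun_cong[OF P2, of 1] Z z4 z5 z6 z7 by (simp add: Bm)
  have Q3: "(a1*(1+a1)/4) * m 1 0 = m 4 5 * m 7 6 * (-a2/2)"
    using fun_cong[OF P3, of 0] Z z4 z5 z6 z7 by (simp add: Bm)
  have Q4: "(1-a1*(1+a1)/4) * m 1 0 = m 7 6 * m 4 5 * (1+a2/2)"
    using fun_cong[OF P4, of 0] Z z4 z5 z6 z7 by (simp add: Bm)
  have Q2': "(1+a1/2) * m 0 1 = m 5 4 * m 6 7 * (1 - a2*(1+a2)/4)" using Q2 by (simp add: mult.commute)
  have "m 5 4 * m 6 7 * (1 + a1) = 0" using fin1[OF Q1 Q2' a2 a10] .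
  then have "1 + a1 = 0" using n54 n67 by simp
  then have a1m: "a1 = -1" by (metis add.commute eq_neg_iff_add_eq_0)
  have "m 4 5 * m 7 6 = 0" using fin2[OF Q3 a2 a1m] .
  then show False using n45 n76 by simp
qed

end

lemma B2_iff: "B2_isomorphic a b = (\<exists>f. isoB f a b)"
  by (simp only: B2_isomorphic_def isoB_def conj_assoc)

theorem lemma3p5:
  fixes \<alpha>1 \<alpha>2 :: complex
  shows "B2_isomorphic \<alpha>1 \<alpha>2 \<longleftrightarrow> \<alpha>1 = \<alpha>2"
proof
  assume "B2_isomorphic \<alpha>1 \<alpha>2"
  then obtain f where "isoB f \<alpha>1 \<alpha>2" using B2_iff by blast
  then show "\<alpha>1 = \<alpha>2" by (rule isoB.main)
next
  assume h: "\<alpha>1 = \<alpha>2"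
  have "B2_isomorphic \<alpha>1 \<alpha>1"
    unfolding B2_isomorphic_def
    apply (rule exI[of _ id])
    apply (simp add: bij_betw_id)
    done
  then show "B2_isomorphic \<alpha>1 \<alpha>2" using h by simp
qed

end
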